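(* Let $\psi$ be the SC decoder and $\Psi$ the SSC decoder (with arbitrary, not necessarily ordered, index sets). Then $$\Pr\big(\psi(A\mathbf X,\mathbf Y)\neq\mathbf X\big)\le\frac{1}{2\log 2}\sum_{i\in\mathcal I_0}H(C_i\mid C_1^{i-1},\mathbf Y),$$ $$\Pr\big(\Psi(A\mathbf X,\mathbf Y)\neq\mathbf X\big)\le\frac{1}{\log 2}\sum_{i\in\mathcal I_0}H(C_i\mid C_1^{i-1},\mathbf Y),$$ where all logarithms (in $\log 2$ and in the entropies) are to base $|\mathcal X|$.
   Context: Setup: $\mathcal X,\mathcal Y$ finite, $|\mathcal X|\ge2$; $(\mathbf X,\mathbf Y)$ random on $\mathcal X^n\times\mathcal Y^n$; $A:\mathcal X^n\to\mathcal X^l$; $\{\mathcal I_0,\mathcal I_1\}$ a partition of $\{1,\dots,n\}$ with $|\mathcal I_1|=l$; $B:\mathcal X^n\to\mathcal X^{n-l}$ such that $T:\mathcal X^n\to\mathcal X^n$ is bijective, where $T(x)$ is the vector $c$ whose entries on $\mathcal I_1$ (increasing order) form $Ax$ and whose entries on $\mathcal I_0$ (increasing order) form $Bx$. Notation: $c_i^j=(c_i,\dots,c_j)$, $c_{\mathcal I_1}$ the subvector on $\mathcal I_1$. Extended codeword: $\mathbf C=(C_1,\dots,C_n)=T(\mathbf X)$. SC decoder: for $i\in\mathcal I_0$, $f_i(c_1^{i-1},y)\in\arg\max_{a}\mu_{C_i\mid C_1^{i-1}\mathbf Y}(a\mid c_1^{i-1},y)$ (ties/zero-probability conditions by a fixed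 rule). Given $(u,y)$, build $\hat c$ for $i=1,\dots,n$: $\hat c_{\mathcal I_1}=u$, and $\hat c_i=f_i(\hat c_1^{i-1},y)$ for $i\in\mathcal I_0$; $\psi(u,y)=T^{-1}(\hat c)$. SSC decoder: same recursion, except that for $i\in\mathcal I_0$, $\hat c_i$ is drawn at random according to $\mu_{C_i\mid C_1^{i-1}\mathbf Y}(\cdot\mid\hat c_1^{i-1},y)$ (fixed arbitrary distribution if the condition has probability zero); $\Psi(u,y)=T^{-1}(\hat c)$. *)

theory Defs
  imports "HOL-Probability.Probability"
begin

text \<open>Indices are 0-based: positions are 0..n-1. Vectors in X^n are lists of length n.\<close>

definition rank :: "nat set \<Rightarrow> nat \<Rightarrow> nat" where
  "rank I i = card {j \<in> I. j < i}"

definition extT :: "nat \<Rightarrow> nat set \<Rightarrow> ('a list \<Rightarrow> 'a list) \<Rightarrow> ('a list \<Rightarrow> 'a list)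
    \<Rightarrow> 'a list \<Rightarrow> 'a list" where
  "extT n I1 A B x =
     map (\<lambda>i. if i \<in> I1 then A x ! rank I1 i else B x ! rank ({0..<n} - I1) i) [0..<n]"

text \<open>Conditioning event {C_1^{i-1} = c, Y = y} for the joint law q of (C, Y).\<close>
definition cond_event :: "nat \<Rightarrow> 'a list \<Rightarrow> 'b list \<Rightarrow> ('a list \<times> 'b list) set" where
  "cond_event i c y = {(c', y'). take i c' = c \<and> y' = y}"

definition cond_pos :: "('a list \<times> 'b list) pmf \<Rightarrow> nat \<Rightarrow> 'a list \<Rightarrow> 'b list \<Rightarrow> bool" where
  "cond_pos q i c y \<longleftrightarrow> set_pmf q \<inter> cond_event i c y \<noteq> {}"

text \<open>mu_{C_i | C_1^{i-1} Y}( . | c, y) (meaningful when cond_pos q i c y).\<close>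
definition cond_C :: "('a list \<times> 'b list) pmf \<Rightarrow> nat \<Rightarrow> 'a list \<Rightarrow> 'b list \<Rightarrow> 'a pmf" where
  "cond_C q i c y = map_pmf (\<lambda>(c', y'). c' ! i) (cond_pmf q (cond_event i c y))"

fun sc_vec :: "nat set \<Rightarrow> (nat \<Rightarrow> 'a list \<Rightarrow> 'b list \<Rightarrow> 'a) \<Rightarrow> 'a list \<Rightarrow> 'b list
    \<Rightarrow> nat \<Rightarrow> 'a list" where
  "sc_vec I1 f u y 0 = []"
| "sc_vec I1 f u y (Suc i) =
     (let c = sc_vec I1 f u y i in c @ [if i \<in> I1 then u ! rank I1 i else f i c y])"

definition sc_decoder :: "nat \<Rightarrow> nat set \<Rightarrow> ('a list \<Rightarrow> 'a list) \<Rightarrow> ('a list \<Rightarrow> 'a list)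
    \<Rightarrow> (nat \<Rightarrow> 'a list \<Rightarrow> 'b list \<Rightarrow> 'a) \<Rightarrow> 'a list \<Rightarrow> 'b list \<Rightarrow> 'a list" where
  "sc_decoder n I1 A B f u y = inv_into {x. length x = n} (extT n I1 A B) (sc_vec I1 f u y n)"

text \<open>SSC recursion (random), with fallback distributions d for zero-probability conditions.\<close>
fun ssc_vec :: "('a list \<times> 'b list) pmf \<Rightarrow> nat set \<Rightarrow> (nat \<Rightarrow> 'a list \<Rightarrow> 'b list \<Rightarrow> 'a pmf)
    \<Rightarrow> 'a list \<Rightarrow> 'b list \<Rightarrow> nat \<Rightarrow> 'a list pmf" where
  "ssc_vec q I1 d u y 0 = return_pmf []"
| "ssc_vec q I1 d u y (Suc i) =
     bind_pmf (ssc_vec q I1 d u y i) (\<lambda>c.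
       if i \<in> I1 then return_pmf (c @ [u ! rank I1 i])
       else map_pmf (\<lambda>a. c @ [a]) (if cond_pos q i c y then cond_C q i c y else d i c y))"

definition ssc_decoder :: "nat \<Rightarrow> nat set \<Rightarrow> ('a list \<Rightarrow> 'a list) \<Rightarrow> ('a list \<Rightarrow> 'a list)
    \<Rightarrow> ('a list \<times> 'b list) pmf \<Rightarrow> (nat \<Rightarrow> 'a list \<Rightarrow> 'b list \<Rightarrow> 'a pmf)
    \<Rightarrow> 'a list \<Rightarrow> 'b list \<Rightarrow> 'a list pmf" where
  "ssc_decoder n I1 A B q d u y =
     map_pmf (inv_into {x. length x = n} (extT n I1 A B)) (ssc_vec q I1 d u y n)"

definition cond_entropy_pmf :: "real \<Rightarrow> ('u \<times> 'v) pmf \<Rightarrow> real" where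
  "cond_entropy_pmf b r =
     - (\<Sum>z\<in>set_pmf r. pmf r z * log b (pmf r z / pmf (map_pmf snd r) (snd z)))"

end

theory Submission
  imports Defs
begin

lemma ln_ge_1_minus_inv: "(y::real) > 0 \<Longrightarrow> 1 - 1/y \<le> ln y"
proof -
  assume "y > 0"
  have "ln (1/y) \<le> 1/y - 1" using \<open>y>0\<close> by (intro ln_le_minus_one) simp
  thus ?thesis using \<open>y>0\<close> by (simp add: ln_div)
qed

lemma L1: assumes "0 < (x::real)" "x \<le> 1/2" shows "2 * ln 2 * (1 - x) \<le> - ln x"
proof -
  define y where "y = 1/(2*x)"
  have y: "y \<ge> 1" "y > 0" using assms by (auto simp: y_def field_simps)
  have x: "x = 1/(2*y)" using assms by (simp add: y_def)
  have "- ln x = ln 2 + ln y" using y by (simp add: x ln_div ln_mult)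
  moreover have "ln y \<ge> 1 - 1/y" using ln_ge_1_minus_inv y by auto
  moreover have "1 - 1/y \<ge> 0" using y by (simp add: field_simps)
  moreover have "ln 2 * (1 - 1/y) \<le> 1 - 1/y" using ln_2_less_1 \<open>1 - 1/y \<ge> 0\<close>
    by (simp add: mult_left_le_one_le)
  moreover have "2 * ln 2 * (1 - x) = 2 * ln 2 - ln 2 / y" using y by (simp add: x field_simps)
  moreover have "ln 2 * (1 - 1/y) = ln 2 - ln 2 / y" by (simp add: field_simps)
  ultimately show ?thesis by linarith
qed

lemma L2: assumes "1/2 \<le> (m::real)" "m \<le> 1" shows "(1 - m) * ln 2 \<le> - (m * ln m)"
proof (cases "m \<ge> ln 2")
  case True
  have m0: "m > 0" using assms by simp
  have "ln m \<le> m - 1" using m0 by (rule ln_le_minus_one)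
  hence "m * (1 - m) \<le> - (m * ln m)" using m0
    by (metis minus_diff_eq minus_mult_right mult_le_cancel_left_pos neg_le_iff_le)
  moreover have "(1 - m) * ln 2 \<le> (1 - m) * m" using True assms by (intro mult_left_mono) auto
  ultimately show ?thesis by (simp add: mult.commute)
next
  case False
  define u where "u = 2*m"
  have u: "u \<ge> 1" "u > 0" using assms by (auto simp: u_def)
  have m: "m = u/2" by (simp add: u_def)
  have "ln u \<le> u - 1" using u by (intro ln_le_minus_one) auto
  hence a: "(u/2) * ln u \<le> (u/2) * (u - 1)" using u by (intro mult_left_mono) auto
  have b: "(u/2) * (u-1) \<le> ln 2 * (u - 1)" using False u by (intro mult_right_mono) (auto simp: m)
  have "- (m * ln m) = (u/2) * ln 2 - (u/2) * ln u" using u by (simp add: m ln_div algebra_simps)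
  moreover have "(1 - m) * ln 2 = ln 2 - (u/2) * ln 2" by (simp add: m algebra_simps)
  ultimately show ?thesis using a b by (simp add: algebra_simps)
qed

lemma HR:
  fixes \<mu> :: "'a::finite \<Rightarrow> real"
  assumes nn: "\<And>a. \<mu> a \<ge> 0" and s1: "(\<Sum>a\<in>UNIV. \<mu> a) = 1" and mx: "\<And>a. \<mu> a \<le> \<mu> g"
  shows "2 * ln 2 * (1 - \<mu> g) \<le> (\<Sum>a\<in>UNIV. \<mu> a * - ln (\<mu> a))"
proof (cases "\<mu> g \<le> 1/2")
  case True
  have gpos: "\<mu> g > 0"
  proof (rule ccontr)
    assume "\<not> \<mu> g > 0"
    hence "\<And>a. \<mu> a \<le> 0" using mx by (meson linorder_not_le order_trans)
    hence "(\<Sum>a\<in>UNIV. \<mu> a) \<le> 0" by (intro sum_nonpos) auto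
    thus False using s1 by simp
  qed
  have K: "2 * ln 2 * (1 - \<mu> g) \<le> - ln (\<mu> g)" using L1[OF gpos True] .
  have "\<mu> a * (2 * ln 2 * (1 - \<mu> g)) \<le> \<mu> a * - ln (\<mu> a)" for a
  proof (cases "\<mu> a = 0")
    case False
    hence pa: "\<mu> a > 0" using nn[of a] by simp
    have "ln (\<mu> a) \<le> ln (\<mu> g)" using pa mx[of a] by simp
    thus ?thesis using K nn[of a] by (intro mult_left_mono) auto
  qed simp
  hence "(\<Sum>a\<in>UNIV. \<mu> a * (2 * ln 2 * (1 - \<mu> g))) \<le> (\<Sum>a\<in>UNIV. \<mu> a * - ln (\<mu> a))"
    by (intro sum_mono)
  thus ?thesis by (simp add: sum_distrib_right[symmetric] s1)
next
  case False
  hence gg: "\<mu> g > 1/2" by simp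
  have sum_rest: "(\<Sum>a\<in>UNIV - {g}. \<mu> a) = 1 - \<mu> g"
    using s1 sum.remove[of UNIV g \<mu>] by simp
  have g1: "\<mu> g \<le> 1"
  proof -
    have "(\<Sum>a\<in>UNIV - {g}. \<mu> a) \<ge> 0" by (intro sum_nonneg) (simp add: nn)
    thus ?thesis using sum_rest by simp
  qed
  have t: "1 - \<mu> g > 0 \<or> 1 - \<mu> g = 0" using g1 by auto
  have lg: "ln 2 \<le> - ln (1 - \<mu> g)" if "1 - \<mu> g > 0"
  proof -
    have "ln (1 - \<mu> g) \<le> ln (1/2)" using that gg by simp
    thus ?thesis by (simp add: ln_div)
  qed
  have rest: "\<mu> a * ln 2 \<le> \<mu> a * - ln (\<mu> a)" if "a \<in> UNIV - {g}" for a
  proof (cases "\<mu> a = 0")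
    case False
    hence pa: "\<mu> a > 0" using nn[of a] by simp
    have le: "\<mu> a \<le> 1 - \<mu> g"
    proof -
      have "\<mu> a \<le> (\<Sum>a\<in>UNIV - {g}. \<mu> a)"
        using that by (intro member_le_sum) (auto simp: nn)
      thus ?thesis using sum_rest by simp
    qed
    hence "1 - \<mu> g > 0" using pa by simp
    have "ln (\<mu> a) \<le> ln (1 - \<mu> g)" using pa le by simp
    hence "ln 2 \<le> - ln (\<mu> a)" using lg[OF \<open>1 - \<mu> g > 0\<close>] by simp
    thus ?thesis using pa by (intro mult_left_mono) auto
  qed simp
  have "(\<Sum>a\<in>UNIV - {g}. \<mu> a * ln 2) \<le> (\<Sum>a\<in>UNIV - {g}. \<mu> a * - ln (\<mu> a))"
    by (intro sum_mono rest)
  hence R: "(1 - \<mu> g) * ln 2 \<le> (\<Sum>a\<in>UNIV - {g}. \<mu> a * - ln (\<mu> a))"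
    by (simp add: sum_distrib_right[symmetric] sum_rest)
  have G: "(1 - \<mu> g) * ln 2 \<le> \<mu> g * - ln (\<mu> g)" using L2[of "\<mu> g"] gg g1 by simp
  have "(\<Sum>a\<in>UNIV. \<mu> a * - ln (\<mu> a)) = \<mu> g * - ln (\<mu> g) + (\<Sum>a\<in>UNIV - {g}. \<mu> a * - ln (\<mu> a))"
    by (rule sum.remove) auto
  thus ?thesis using R G by (simp add: algebra_simps)
qed


lemma P1: "pmf (map_pmf snd r) S = (\<Sum>a\<in>UNIV. pmf r ((a::'a::finite), S))"
proof -
  have e: "snd -` {S} = (\<lambda>a. (a,S)) ` (UNIV::'a set)" by auto
  have "pmf (map_pmf snd r) S = measure r (snd -` {S})" by (rule pmf_map)
  also have "\<dots> = sum (pmf r) ((\<lambda>a. (a,S)) ` (UNIV::'a set))"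
    unfolding e by (rule measure_measure_pmf_finite) simp
  also have "\<dots> = (\<Sum>a\<in>UNIV. pmf r (a, S))"
    by (subst sum.reindex) (auto simp: inj_on_def)
  finally show ?thesis .
qed

lemma P2:
  fixes r :: "('a::finite \<times> 'c) pmf"
  assumes fin: "finite (set_pmf r)" and F0: "\<And>z. z \<notin> set_pmf r \<Longrightarrow> F z = 0"
  shows "(\<Sum>z\<in>set_pmf r. F z) = (\<Sum>S\<in>set_pmf (map_pmf snd r). \<Sum>a\<in>UNIV. F (a, S))"
proof -
  have fs: "finite (set_pmf (map_pmf snd r))" using fin by simp
  have sub: "set_pmf r \<subseteq> UNIV \<times> set_pmf (map_pmf snd r)" by force
  have "(\<Sum>z\<in>set_pmf r. F z) = (\<Sum>z\<in>UNIV \<times> set_pmf (map_pmf snd r). F z)"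
    by (rule sum.mono_neutral_left) (use fs sub F0 in auto)
  also have "\<dots> = (\<Sum>a\<in>UNIV. \<Sum>S\<in>set_pmf (map_pmf snd r). F (a, S))"
    by (simp add: sum.cartesian_product)
  also have "\<dots> = (\<Sum>S\<in>set_pmf (map_pmf snd r). \<Sum>a\<in>UNIV. F (a, S))"
    by (rule sum.swap)
  finally show ?thesis .
qed

lemma ent_nat:
  assumes "b > 1"
  shows "cond_entropy_pmf b r =
    (\<Sum>z\<in>set_pmf r. pmf r z * - ln (pmf r z / pmf (map_pmf snd r) (snd z))) / ln b"
  unfolding cond_entropy_pmf_def log_def
  by (simp add: sum_divide_distrib sum_negf)

lemma G1:
  fixes r :: "('a::finite \<times> 'c) pmf" and g :: "'c \<Rightarrow> 'a" and b :: real
  assumes fin: "finite (set_pmf r)" and b: "b > 1"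
    and mx: "\<And>S a. pmf (map_pmf snd r) S > 0 \<Longrightarrow> pmf r (a,S) \<le> pmf r (g S, S)"
  shows "measure r {z. g (snd z) \<noteq> fst z} \<le> 1 / (2 * log b 2) * cond_entropy_pmf b r"
proof -
  define \<sigma> where "\<sigma> = pmf (map_pmf snd r)"
  have lb: "ln b > 0" using b by simp
  have "measure r {z. g (snd z) \<noteq> fst z} = measure r (set_pmf r \<inter> {z. g (snd z) \<noteq> fst z})"
    by (metis measure_Int_set_pmf Int_commute)
  also have "\<dots> = (\<Sum>z\<in>set_pmf r \<inter> {z. g (snd z) \<noteq> fst z}. pmf r z)"
    using fin by (intro measure_measure_pmf_finite) simp
  also have "\<dots> = (\<Sum>z\<in>set_pmf r. pmf r z * (if g (snd z) \<noteq> fst z then 1 else 0))"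
    by (subst sum.inter_restrict[OF fin]) (simp add: if_distrib cong: if_cong)
  also have "\<dots> = (\<Sum>S\<in>set_pmf (map_pmf snd r). \<Sum>a\<in>UNIV. pmf r (a,S) * (if g S \<noteq> a then 1 else 0))"
    by (subst P2[OF fin]) (auto simp: set_pmf_iff)
  also have "\<dots> \<le> (\<Sum>S\<in>set_pmf (map_pmf snd r). 1 / (2 * ln 2) *
          (\<Sum>a\<in>UNIV. pmf r (a,S) * - ln (pmf r (a,S) / \<sigma> S)))"
  proof (rule sum_mono)
    fix S assume S: "S \<in> set_pmf (map_pmf snd r)"
    have "\<sigma> S \<noteq> 0" using S unfolding \<sigma>_def by (metis set_pmf_iff)
    hence sp: "\<sigma> S > 0" by (simp add: \<sigma>_def pmf_nonneg less_le)
    define \<mu> where "\<mu> a = pmf r (a,S) / \<sigma> S" for a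
    have s1: "(\<Sum>a\<in>UNIV. \<mu> a) = 1" using sp unfolding \<mu>_def
      by (simp add: sum_divide_distrib[symmetric] \<sigma>_def P1[symmetric])
    have mxm: "\<mu> a \<le> \<mu> (g S)" for a
      unfolding \<mu>_def using mx[of S a] sp by (simp add: \<sigma>_def divide_right_mono)
    have hr: "2 * ln 2 * (1 - \<mu> (g S)) \<le> (\<Sum>a\<in>UNIV. \<mu> a * - ln (\<mu> a))"
    proof -
      have nn: "\<And>a. \<mu> a \<ge> 0" using sp by (simp add: \<mu>_def)
      show ?thesis by (rule HR[OF nn s1 mxm])
    qed
    have l: "(\<Sum>a\<in>UNIV. pmf r (a,S) * (if g S \<noteq> a then 1 else 0)) = \<sigma> S * (1 - \<mu> (g S))"
    proof -
      have "(\<Sum>a\<in>UNIV. pmf r (a,S) * (if g S \<noteq> a then 1 else 0))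
          = (\<Sum>a\<in>UNIV. pmf r (a,S) - (if a = g S then pmf r (a,S) else 0))"
        by (intro sum.cong) auto
      also have "\<dots> = \<sigma> S - pmf r (g S, S)"
        by (simp add: sum_subtractf \<sigma>_def P1)
      finally have e: "(\<Sum>a\<in>UNIV. pmf r (a,S) * (if g S \<noteq> a then 1 else 0)) = \<sigma> S - pmf r (g S, S)" .
      show ?thesis unfolding e using sp by (simp add: \<mu>_def right_diff_distrib)
    qed
    have rr: "(\<Sum>a\<in>UNIV. pmf r (a,S) * - ln (pmf r (a,S) / \<sigma> S)) = \<sigma> S * (\<Sum>a\<in>UNIV. \<mu> a * - ln (\<mu> a))"
      unfolding sum_distrib_left \<mu>_def using sp by (intro sum.cong) auto
    have "\<sigma> S * (1 - \<mu> (g S)) \<le> \<sigma> S * ((\<Sum>a\<in>UNIV. \<mu> a * - ln (\<mu> a)) / (2 * ln 2))"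
      using hr sp by (intro mult_left_mono) (auto simp: field_simps)
    thus "(\<Sum>a\<in>UNIV. pmf r (a,S) * (if g S \<noteq> a then 1 else 0)) \<le> 1 / (2 * ln 2) *
          (\<Sum>a\<in>UNIV. pmf r (a,S) * - ln (pmf r (a,S) / \<sigma> S))"
      unfolding l rr by simp
  qed
  also have "\<dots> = 1 / (2 * ln 2) * (\<Sum>z\<in>set_pmf r. pmf r z * - ln (pmf r z / \<sigma> (snd z)))"
    by (subst P2[OF fin]) (auto simp: set_pmf_iff sum_distrib_left)
  also have "\<dots> = 1 / (2 * log b 2) * cond_entropy_pmf b r"
    using lb by (simp add: ent_nat[OF b] \<sigma>_def log_def)
  finally show ?thesis .
qed

lemma G2:
  fixes r :: "('a::finite \<times> 'c) pmf" and b :: real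
  assumes fin: "finite (set_pmf r)" and b: "b > 1"
  shows "(\<integral>z. 1 - pmf r z / pmf (map_pmf snd r) (snd z) \<partial>r) \<le> 1 / log b 2 * cond_entropy_pmf b r"
proof -
  define \<sigma> where "\<sigma> = pmf (map_pmf snd r)"
  have lb: "ln b > 0" using b by simp
  have "(\<integral>z. 1 - pmf r z / \<sigma> (snd z) \<partial>r) = (\<Sum>z\<in>set_pmf r. (1 - pmf r z / \<sigma> (snd z)) * pmf r z)"
    by (rule integral_measure_pmf_real) (use fin in auto)
  also have "\<dots> \<le> (\<Sum>z\<in>set_pmf r. pmf r z * - ln (pmf r z / \<sigma> (snd z)) / ln 2)"
  proof (rule sum_mono)
    fix z assume z: "z \<in> set_pmf r"
    have rp: "pmf r z > 0" using z by (simp add: set_pmf_iff pmf_nonneg less_le)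
    have le: "pmf r z \<le> \<sigma> (snd z)"
    proof -
      have "pmf r z = pmf r (fst z, snd z)" by simp
      also have "\<dots> \<le> (\<Sum>a\<in>UNIV. pmf r (a, snd z))" by (intro member_le_sum) auto
      finally show ?thesis by (simp add: \<sigma>_def P1)
    qed
    define x where "x = pmf r z / \<sigma> (snd z)"
    have x: "0 < x" "x \<le> 1" using rp le by (auto simp: x_def)
    have "1 - x \<le> - ln x / ln 2"
    proof -
      have "ln (1/x) \<ge> 1 - 1/(1/x)" using ln_ge_1_minus_inv[of "1/x"] x by simp
      hence A1: "- ln x \<ge> 1 - x" using x by (simp add: ln_div)
      have "- ln x \<ge> 0" using x by simp
      hence "(- ln x) * ln 2 \<le> - ln x"
        using ln_2_less_1 by (intro mult_right_le_one_le) auto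
      moreover have l2: "0 < ln (2::real)" by simp
      ultimately have A2: "- ln x \<le> - ln x / ln 2"
        using mult_imp_le_div_pos by blast
      from A1 A2 show ?thesis by linarith
    qed
    hence "(1 - x) * pmf r z \<le> (- ln x / ln 2) * pmf r z" using rp by (intro mult_right_mono) auto
    thus "(1 - pmf r z / \<sigma> (snd z)) * pmf r z \<le> pmf r z * - ln (pmf r z / \<sigma> (snd z)) / ln 2"
      unfolding x_def[symmetric] by (simp add: mult.commute)
  qed
  also have "\<dots> = (\<Sum>z\<in>set_pmf r. pmf r z * - ln (pmf r z / \<sigma> (snd z))) / ln 2"
    by (simp add: sum_divide_distrib)
  also have "\<dots> = 1 / log b 2 * cond_entropy_pmf b r"
    using lb by (simp add: ent_nat[OF b] \<sigma>_def log_def)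
  finally show ?thesis unfolding \<sigma>_def .
qed


lemma BIG:
  fixes M :: "'x pmf" and K :: "'x \<Rightarrow> 'y pmf" and F :: "'x \<Rightarrow> real"
  assumes le: "\<And>x. x \<in> set_pmf M \<Longrightarrow> measure (K x) E \<le> F x" and int: "integrable M F"
  shows "measure (bind_pmf M K) E \<le> (\<integral>x. F x \<partial>M)"
proof -
  have F0: "AE x in M. 0 \<le> F x"
    by (rule AE_pmfI) (use le in \<open>meson measure_nonneg order_trans\<close>)
  have "emeasure (bind_pmf M K) E = (\<integral>\<^sup>+x. emeasure (K x) E \<partial>M)" by simp
  also have "\<dots> \<le> (\<integral>\<^sup>+x. ennreal (F x) \<partial>M)"
    by (intro nn_integral_mono_AE AE_pmfI) (simp add: measure_pmf.emeasure_eq_measure le ennreal_leI)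
  also have "\<dots> = ennreal (\<integral>x. F x \<partial>M)"
    by (rule nn_integral_eq_integral[OF int F0])
  finally have "ennreal (measure (bind_pmf M K) E) \<le> ennreal (\<integral>x. F x \<partial>M)"
    by (simp add: measure_pmf.emeasure_eq_measure)
  moreover have "0 \<le> (\<integral>x. F x \<partial>M)" using F0 by (rule integral_nonneg_AE)
  ultimately show ?thesis by (simp add: ennreal_le_iff)
qed

lemma BND:
  "measure (bind_pmf M K) E \<le> measure M {c. c \<noteq> c0} + measure (K c0) E"
proof -
  define F where "F c = indicator {c. c \<noteq> c0} c + measure (K c0) E" for c
  have i1: "integrable M (indicator {c. c \<noteq> c0} :: _ \<Rightarrow> real)"
    by (rule integrable_real_indicator) (auto simp: measure_pmf.emeasure_eq_measure)
  have int: "integrable M F" unfolding F_def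
    by (rule Bochner_Integration.integrable_add[OF i1]) simp
  have "measure (bind_pmf M K) E \<le> (\<integral>c. F c \<partial>M)"
  proof (rule BIG[OF _ int])
    fix c assume "c \<in> set_pmf M"
    show "measure (K c) E \<le> F c"
    proof -
      have "measure (K c) E \<le> 1" by (rule measure_pmf.prob_le_1)
      moreover have "measure (K c0) E \<ge> 0" by (rule measure_nonneg)
      ultimately have "measure (K c) E + 0 \<le> 1 + measure (K c0) E" by (rule add_mono)
      thus ?thesis unfolding F_def by (cases "c = c0") (auto simp: indicator_def)
    qed
  qed
  also have "\<dots> = measure M {c. c \<noteq> c0} + measure (K c0) E"
    unfolding F_def
    by (subst Bochner_Integration.integral_add[OF i1]) (auto simp: measure_pmf.emeasure_eq_measure)
  finally show ?thesis .
qed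

lemma K1:
  "pmf (map_pmf snd (map_pmf (\<lambda>(c', y'). (c' ! i, (take i c', y'))) q)) (c, y)
     = measure q (cond_event i c y)"
proof -
  have "map_pmf snd (map_pmf (\<lambda>(c', y'). (c' ! i, (take i c', y'))) q)
        = map_pmf (\<lambda>(c', y'). (take i c', y')) q"
    by (simp add: pmf.map_comp o_def case_prod_unfold)
  moreover have "(\<lambda>(c', y'). (take i c', y')) -` {(c, y)} = cond_event i c y"
    by (auto simp: cond_event_def)
  ultimately show ?thesis by (simp add: pmf_map)
qed

lemma K2:
  "cond_pos q i c y \<longleftrightarrow> pmf (map_pmf snd (map_pmf (\<lambda>(c', y'). (c' ! i, (take i c', y'))) q)) (c, y) > 0"
  unfolding K1 cond_pos_def
  by (metis measure_pmf_zero_iff measure_nonneg less_le)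

lemma K3:
  assumes "cond_pos q i c y"
  shows "pmf (cond_C q i c y) a =
    pmf (map_pmf (\<lambda>(c', y'). (c' ! i, (take i c', y'))) q) (a, (c, y)) /
    pmf (map_pmf snd (map_pmf (\<lambda>(c', y'). (c' ! i, (take i c', y'))) q)) (c, y)"
proof -
  define E where "E = cond_event i c y"
  have ne: "set_pmf q \<inter> E \<noteq> {}" using assms by (simp add: cond_pos_def E_def)
  have "pmf (cond_C q i c y) a = measure (cond_pmf q E) ((\<lambda>(c', y'). c' ! i) -` {a})"
    by (simp add: cond_C_def E_def pmf_map)
  also have "\<dots> = measure q (E \<inter> ((\<lambda>(c', y'). c' ! i) -` {a})) / measure q E"
    using ne emeasure_measure_pmf_not_zero[OF ne]
    by (simp add: cond_pmf.rep_eq[OF ne] measure_pmf.emeasure_eq_measure)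
  also have "E \<inter> ((\<lambda>(c', y'). c' ! i) -` {a}) = (\<lambda>(c', y'). (c' ! i, (take i c', y'))) -` {(a, (c, y))}"
    by (auto simp: E_def cond_event_def)
  finally show ?thesis unfolding K1 E_def by (simp only: pmf_map)
qed


theorem lemma4:
  fixes p :: "('a::finite list \<times> 'b::finite list) pmf"
    and n l :: nat and I1 :: "nat set"
    and A B :: "'a list \<Rightarrow> 'a list"
    and f :: "nat \<Rightarrow> 'a list \<Rightarrow> 'b list \<Rightarrow> 'a"
    and d :: "nat \<Rightarrow> 'a list \<Rightarrow> 'b list \<Rightarrow> 'a pmf"
  defines "T \<equiv> extT n I1 A B"
  defines "q \<equiv> map_pmf (\<lambda>(x, y). (T x, y)) p"
  defines "I0 \<equiv> {0..<n} - I1"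
  defines "b \<equiv> real CARD('a)"
  defines "H \<equiv> (\<lambda>i. cond_entropy_pmf b
             (map_pmf (\<lambda>(x, y). (T x ! i, (take i (T x), y))) p))"
  assumes "CARD('a) \<ge> 2"
    and "set_pmf p \<subseteq> {(x, y). length x = n \<and> length y = n}"
    and "I1 \<subseteq> {0..<n}" and "card I1 = l"
    and "\<forall>x. length x = n \<longrightarrow> length (A x) = l"
    and "\<forall>x. length x = n \<longrightarrow> length (B x) = n - l"
    and "bij_betw T {x. length x = n} {x. length x = n}"
    and "\<forall>i c y. i \<in> I0 \<longrightarrow> cond_pos q i c y \<longrightarrow>
           (\<forall>a. pmf (cond_C q i c y) a \<le> pmf (cond_C q i c y) (f i c y))"
  shows "measure_pmf.prob p {(x, y). sc_decoder n I1 A B f (A x) y \<noteq> x}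
           \<le> 1 / (2 * log b 2) * (\<Sum>i\<in>I0. H i)
       \<and> measure_pmf.prob
           (bind_pmf p (\<lambda>(x, y). map_pmf (\<lambda>x'. (x', x)) (ssc_decoder n I1 A B q d (A x) y)))
           {(x', x). x' \<noteq> x}
           \<le> 1 / log b 2 * (\<Sum>i\<in>I0. H i)"
proof -
  note card2 = assms(6) and supp = assms(7) and bij = assms(12) and maxf = assms(13)
  have b1: "b > 1" using card2 by (simp add: b_def)
  define g where "g i = (\<lambda>(c'::'a list, y'::'b list). (c'!i, (take i c', y')))" for i
  define r where "r i = map_pmf (g i) q" for i
  have r_p: "r i = map_pmf (\<lambda>(x,y). (T x ! i, (take i (T x), y))) p" for i
    by (simp add: r_def q_def g_def pmf.map_comp o_def case_prod_unfold)
  have H_r: "H i = cond_entropy_pmf b (r i)" for i by (simp add: H_def r_p)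
  have finp: "finite (set_pmf p)"
  proof (rule finite_subset)
    show "set_pmf p \<subseteq> {xs. set xs \<subseteq> UNIV \<and> length xs = n} \<times> {ys. set ys \<subseteq> UNIV \<and> length ys = n}"
      using supp by auto
    show "finite ({xs::'a list. set xs \<subseteq> UNIV \<and> length xs = n} \<times> {ys::'b list. set ys \<subseteq> UNIV \<and> length ys = n})"
      by (intro finite_cartesian_product finite_lists_length_eq) auto
  qed
  have finr: "finite (set_pmf (r i))" for i by (simp add: r_p finp)
  have lenT: "length (T x) = n" for x by (simp add: T_def extT_def)
  have Tnth: "k < n \<Longrightarrow> T x ! k = (if k \<in> I1 then A x ! rank I1 k else B x ! rank I0 k)" for k x
    by (simp add: T_def extT_def I0_def)
  have cpos: "cond_pos q i (take i (T x)) y" if "(x,y) \<in> set_pmf p" for i x y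
  proof -
    have "(T x, y) \<in> set_pmf q" using that by (force simp: q_def)
    thus ?thesis by (auto simp: cond_pos_def cond_event_def)
  qed
  have muf: "pmf (cond_C q i (take i (T x)) y) a =
      pmf (r i) (a, (take i (T x), y)) / pmf (map_pmf snd (r i)) (take i (T x), y)"
    if "(x,y) \<in> set_pmf p" for i x y a
    using K3[OF cpos[OF that]] by (simp add: r_def g_def)
  have invT: "inv_into {x. length x = n} T (T x) = x" if "length x = n" for x
    by (rule bij_betw_inv_into_left[OF bij]) (simp add: that)
  have scvec: "sc_vec I1 f (A x) y k = take k (T x)"
    if ok: "\<forall>i\<in>I0. f i (take i (T x)) y = T x ! i" and k: "k \<le> n" for x y k
    using k
  proof (induction k)
    case 0
    then show ?case by simp
  next
    case (Suc k)
    hence kn: "k < n" by simp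
    have tk: "take (Suc k) (T x) = take k (T x) @ [T x ! k]"
      using kn lenT by (simp add: take_Suc_conv_app_nth)
    show ?case
    proof (cases "k \<in> I1")
      case True
      thus ?thesis using Suc kn by (simp add: tk Tnth Let_def)
    next
      case False
      hence "k \<in> I0" using kn by (simp add: I0_def)
      thus ?thesis using Suc kn False ok by (simp add: tk Let_def)
    qed
  qed
  have scok: "sc_decoder n I1 A B f (A x) y = x"
    if xy: "(x,y) \<in> set_pmf p" and ok: "\<forall>i\<in>I0. f i (take i (T x)) y = T x ! i" for x y
  proof -
    have lx: "length x = n" using xy supp by auto
    have "sc_vec I1 f (A x) y n = T x" using scvec[OF ok, of n] lenT by simp
    thus ?thesis using invT[OF lx] by (simp add: sc_decoder_def T_def)
  qed
  define Ei where "Ei i = {(x,y). f i (take i (T x)) y \<noteq> T x ! i}" for i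
  have A1: "measure p {(x, y). sc_decoder n I1 A B f (A x) y \<noteq> x} \<le> (\<Sum>i\<in>I0. measure p (Ei i))"
  proof -
    have "measure p {(x, y). sc_decoder n I1 A B f (A x) y \<noteq> x}
        = measure p ({(x, y). sc_decoder n I1 A B f (A x) y \<noteq> x} \<inter> set_pmf p)"
      by (simp add: measure_Int_set_pmf)
    also have "\<dots> \<le> measure p (\<Union>i\<in>I0. Ei i)"
      by (rule measure_pmf.finite_measure_mono) (auto simp: Ei_def dest: scok)
    also have "\<dots> \<le> (\<Sum>i\<in>I0. measure p (Ei i))"
      by (rule measure_pmf.finite_measure_subadditive_finite) (auto simp: I0_def)
    finally show ?thesis .
  qed
  have A2: "measure p (Ei i) \<le> 1 / (2 * log b 2) * H i" if i: "i \<in> I0" for i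
  proof -
    have "measure p (Ei i) = measure (r i) {z. (\<lambda>(c,y). f i c y) (snd z) \<noteq> fst z}"
      by (simp add: r_p Ei_def case_prod_unfold)
    also have "\<dots> \<le> 1 / (2 * log b 2) * H i"
      unfolding H_r
    proof (rule G1[OF finr b1])
      fix S :: "'a list \<times> 'b list" and a
      assume pos: "pmf (map_pmf snd (r i)) S > 0"
      obtain c y where S: "S = (c,y)" by force
      have cp: "cond_pos q i c y" using pos by (simp add: K2 S r_def g_def)
      have "pmf (cond_C q i c y) a \<le> pmf (cond_C q i c y) (f i c y)" using maxf i cp by blast
      hence "pmf (r i) (a, S) / pmf (map_pmf snd (r i)) S \<le> pmf (r i) (f i c y, S) / pmf (map_pmf snd (r i)) S"
        using K3[OF cp] by (simp add: S r_def g_def)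
      thus "pmf (r i) (a, S) \<le> pmf (r i) ((\<lambda>(c,y). f i c y) S, S)"
        using pos by (simp add: S divide_le_cancel)
    qed
    finally show ?thesis .
  qed
  have PA: "measure p {(x, y). sc_decoder n I1 A B f (A x) y \<noteq> x} \<le> 1 / (2 * log b 2) * (\<Sum>i\<in>I0. H i)"
    using A1 sum_mono[of I0 "\<lambda>i. measure p (Ei i)" "\<lambda>i. 1 / (2 * log b 2) * H i", OF A2]
    by (simp add: sum_distrib_left)
  define \<delta> where "\<delta> i x y = 1 - pmf (cond_C q i (take i (T x)) y) (T x ! i)" for i x y
  have errk: "measure (ssc_vec q I1 d (A x) y k) {c. c \<noteq> take k (T x)} \<le> (\<Sum>i\<in>I0 \<inter> {..<k}. \<delta> i x y)"
    if xy: "(x,y) \<in> set_pmf p" and k: "k \<le> n" for x y k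
    using k
  proof (induction k)
    case 0
    then show ?case by simp
  next
    case (Suc k)
    hence kn: "k < n" by simp
    define c0 where "c0 = take k (T x)"
    have tk: "take (Suc k) (T x) = c0 @ [T x ! k]"
      using kn lenT by (simp add: take_Suc_conv_app_nth c0_def)
    define Kf where "Kf = (\<lambda>c. if k \<in> I1 then return_pmf (c @ [A x ! rank I1 k])
       else map_pmf (\<lambda>a. c @ [a]) (if cond_pos q k c y then cond_C q k c y else d k c y))"
    have "measure (ssc_vec q I1 d (A x) y (Suc k)) {c. c \<noteq> take (Suc k) (T x)}
        = measure (bind_pmf (ssc_vec q I1 d (A x) y k) Kf) {c. c \<noteq> take (Suc k) (T x)}"
      by (simp add: Kf_def)
    also have "\<dots> \<le> measure (ssc_vec q I1 d (A x) y k) {c. c \<noteq> c0} + measure (Kf c0) {c. c \<noteq> take (Suc k) (T x)}"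
      by (rule BND)
    also have "\<dots> \<le> (\<Sum>i\<in>I0 \<inter> {..<Suc k}. \<delta> i x y)"
    proof (cases "k \<in> I1")
      case True
      have "measure (Kf c0) {c. c \<noteq> take (Suc k) (T x)} = 0"
        using True kn by (simp add: Kf_def tk Tnth)
      moreover have "I0 \<inter> {..<Suc k} = I0 \<inter> {..<k}" using True by (auto simp: I0_def less_Suc_eq)
      ultimately show ?thesis using Suc kn by (simp add: c0_def)
    next
      case False
      hence kI0: "k \<in> I0" using kn by (simp add: I0_def)
      have "measure (Kf c0) {c. c \<noteq> take (Suc k) (T x)}
          = measure (cond_C q k c0 y) (UNIV - {T x ! k})"
        using False cpos[OF xy, of k] by (simp add: Kf_def tk c0_def set_diff_eq)
      also have "\<dots> = \<delta> k x y"
        by (subst measure_pmf.finite_measure_Diff) (auto simp: measure_pmf_single \<delta>_def c0_def)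
      finally have e: "measure (Kf c0) {c. c \<noteq> take (Suc k) (T x)} = \<delta> k x y" .
      have "I0 \<inter> {..<Suc k} = insert k (I0 \<inter> {..<k})" using kI0 by auto
      hence "(\<Sum>i\<in>I0 \<inter> {..<Suc k}. \<delta> i x y) = \<delta> k x y + (\<Sum>i\<in>I0 \<inter> {..<k}. \<delta> i x y)"
        by simp
      thus ?thesis using Suc kn e by (simp add: c0_def)
    qed
    finally show ?case .
  qed
  define K where "K = (\<lambda>(x, y). map_pmf (\<lambda>x'. (x', x)) (ssc_decoder n I1 A B q d (A x) y))"
  define F where "F z = (\<Sum>i\<in>I0. \<delta> i (fst z) (snd z))" for z
  have B1: "measure (K z) {(x', x). x' \<noteq> x} \<le> F z" if z: "z \<in> set_pmf p" for z
  proof -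
    obtain x y where zxy: "z = (x,y)" by force
    have xy: "(x,y) \<in> set_pmf p" using z zxy by simp
    have lx: "length x = n" using xy supp by auto
    have "measure (K z) {(x', x). x' \<noteq> x} = measure (ssc_decoder n I1 A B q d (A x) y) {x'. x' \<noteq> x}"
      by (simp add: K_def zxy)
    also have "\<dots> = measure (ssc_vec q I1 d (A x) y n) ((inv_into {x. length x = n} T) -` {x'. x' \<noteq> x})"
      by (simp add: ssc_decoder_def T_def)
    also have "\<dots> \<le> measure (ssc_vec q I1 d (A x) y n) {c. c \<noteq> take n (T x)}"
      by (rule measure_pmf.finite_measure_mono) (auto simp: lenT invT[OF lx])
    also have "\<dots> \<le> (\<Sum>i\<in>I0 \<inter> {..<n}. \<delta> i x y)" by (rule errk[OF xy]) simp
    also have "I0 \<inter> {..<n} = I0" by (auto simp: I0_def)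
    finally show ?thesis by (simp add: F_def zxy)
  qed
  have intp: "integrable p h" for h :: "_ \<Rightarrow> real" by (rule integrable_measure_pmf_finite[OF finp])
  have B2: "(\<integral>z. \<delta> i (fst z) (snd z) \<partial>p) \<le> 1 / log b 2 * H i" for i
  proof -
    have "(\<integral>z. \<delta> i (fst z) (snd z) \<partial>p) =
        (\<integral>z. 1 - pmf (r i) z / pmf (map_pmf snd (r i)) (snd z) \<partial>(r i))"
      unfolding r_p integral_map_pmf
      by (intro integral_cong_AE AE_pmfI) (auto simp: \<delta>_def muf case_prod_unfold r_p)
    also have "\<dots> \<le> 1 / log b 2 * H i" unfolding H_r by (rule G2[OF finr b1])
    finally show ?thesis .
  qed
  have PB: "measure (bind_pmf p K) {(x', x). x' \<noteq> x} \<le> 1 / log b 2 * (\<Sum>i\<in>I0. H i)"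
  proof -
    have "measure (bind_pmf p K) {(x', x). x' \<noteq> x} \<le> (\<integral>z. F z \<partial>p)"
      by (rule BIG[OF B1 intp])
    also have "\<dots> = (\<Sum>i\<in>I0. \<integral>z. \<delta> i (fst z) (snd z) \<partial>p)"
      unfolding F_def by (rule Bochner_Integration.integral_sum) (rule intp)
    also have "\<dots> \<le> (\<Sum>i\<in>I0. 1 / log b 2 * H i)" by (rule sum_mono) (rule B2)
    finally show ?thesis by (simp add: sum_distrib_left)
  qed
  show ?thesis using PA PB by (simp add: K_def)
qed

end
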